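(* Let $\Omega=\mathbb N$, $\Sigma=2^{\mathbb N}$ and $\mu$ a finite measure with $\mu(\{n\})>0$ for all $n$, and let $X(\mu)$ be a Banach sequence space (a vector space of real sequences with a complete norm). Then $X(\mu)$ has an equivalent norm under which it is a Banach function space if and only if $X(\mu)$ is a Banach rectangular function space.
   Context: Rectangular: for some $C>0$, $\chi_Af\in X(\mu)$ and $\|\chi_Af\|\le C\|f\|$ for all $f\in X(\mu)$, $A\subseteq\mathbb N$. A Banach function space (here) is a space of real sequences with a complete norm which is an ideal (if $|f|\le|g|$ coordinatewise and $g$ is in the space, then $f$ is in the space) and whose norm satisfies $\|f\|\le\|g\|$ whenever $|f|\le|g|$. *)

theory Defs
  imports "HOL-Analysis.Analysis"
begin

definition seq_space :: "(nat \<Rightarrow> real) set \<Rightarrow> bool" where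
  "seq_space X \<longleftrightarrow> (\<lambda>n. 0) \<in> X \<and>
     (\<forall>f\<in>X. \<forall>g\<in>X. (\<lambda>n. f n + g n) \<in> X) \<and>
     (\<forall>c::real. \<forall>f\<in>X. (\<lambda>n. c * f n) \<in> X)"

definition seq_norm_on :: "(nat \<Rightarrow> real) set \<Rightarrow> ((nat \<Rightarrow> real) \<Rightarrow> real) \<Rightarrow> bool" where
  "seq_norm_on X N \<longleftrightarrow>
     (\<forall>f\<in>X. N f \<ge> 0) \<and>
     (\<forall>f\<in>X. N f = 0 \<longleftrightarrow> f = (\<lambda>n. 0)) \<and>
     (\<forall>c::real. \<forall>f\<in>X. N (\<lambda>n. c * f n) = \<bar>c\<bar> * N f) \<and>
     (\<forall>f\<in>X. \<forall>g\<in>X. N (\<lambda>n. f n + g n) \<le> N f + N g)"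

definition seq_norm_complete :: "(nat \<Rightarrow> real) set \<Rightarrow> ((nat \<Rightarrow> real) \<Rightarrow> real) \<Rightarrow> bool" where
  "seq_norm_complete X N \<longleftrightarrow>
     (\<forall>u :: nat \<Rightarrow> nat \<Rightarrow> real. (\<forall>k. u k \<in> X) \<longrightarrow>
        (\<forall>e>0. \<exists>M. \<forall>j\<ge>M. \<forall>k\<ge>M. N (\<lambda>n. u j n - u k n) < e) \<longrightarrow>
        (\<exists>f\<in>X. (\<lambda>k. N (\<lambda>n. u k n - f n)) \<longlonglongrightarrow> 0))"

definition banach_seq_space :: "(nat \<Rightarrow> real) set \<Rightarrow> ((nat \<Rightarrow> real) \<Rightarrow> real) \<Rightarrow> bool" where
  "banach_seq_space X N \<longleftrightarrow> seq_space X \<and> seq_norm_on X N \<and> seq_norm_complete X N"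

definition equivalent_norms :: "(nat \<Rightarrow> real) set \<Rightarrow> ((nat \<Rightarrow> real) \<Rightarrow> real) \<Rightarrow> ((nat \<Rightarrow> real) \<Rightarrow> real) \<Rightarrow> bool" where
  "equivalent_norms X N1 N2 \<longleftrightarrow>
     (\<exists>a>0. \<exists>b>0. \<forall>f\<in>X. a * N1 f \<le> N2 f \<and> N2 f \<le> b * N1 f)"

definition banach_function_space :: "(nat \<Rightarrow> real) set \<Rightarrow> ((nat \<Rightarrow> real) \<Rightarrow> real) \<Rightarrow> bool" where
  "banach_function_space X N \<longleftrightarrow> banach_seq_space X N \<and>
     (\<forall>f g. g \<in> X \<longrightarrow> (\<forall>n. \<bar>f n\<bar> \<le> \<bar>g n\<bar>) \<longrightarrow> f \<in> X \<and> N f \<le> N g)"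

definition rectangular :: "(nat \<Rightarrow> real) set \<Rightarrow> ((nat \<Rightarrow> real) \<Rightarrow> real) \<Rightarrow> bool" where
  "rectangular X N \<longleftrightarrow> (\<exists>C>0. \<forall>f\<in>X. \<forall>A :: nat set.
     (\<lambda>n. indicator A n * f n) \<in> X \<and> N (\<lambda>n. indicator A n * f n) \<le> C * N f)"

definition banach_rectangular_function_space :: "(nat \<Rightarrow> real) set \<Rightarrow> ((nat \<Rightarrow> real) \<Rightarrow> real) \<Rightarrow> bool" where
  "banach_rectangular_function_space X N \<longleftrightarrow> banach_seq_space X N \<and> rectangular X N"

end

theory Submission imports Defs begin

definition lnorm :: "((nat \<Rightarrow> real) \<Rightarrow> real) \<Rightarrow> (nat \<Rightarrow> real) \<Rightarrow> real" where
  "lnorm N f = (SUP h\<in>{h. \<forall>n. \<bar>h n\<bar> \<le> (1::real)}. N (\<lambda>n. h n * f n))"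

locale rectsp =
  fixes X :: "(nat \<Rightarrow> real) set" and N :: "(nat \<Rightarrow> real) \<Rightarrow> real" and C :: real
  assumes bs: "banach_seq_space X N"
    and Cpos: "C > 0"
    and rect: "\<And>f A. f \<in> X \<Longrightarrow> (\<lambda>n. indicator A n * f n) \<in> X \<and> N (\<lambda>n. indicator A n * f n) \<le> C * N f"
begin

lemma zero_in: "(\<lambda>n. 0) \<in> X" using bs unfolding banach_seq_space_def seq_space_def by blast
lemma add_in: "f \<in> X \<Longrightarrow> g \<in> X \<Longrightarrow> (\<lambda>n. f n + g n) \<in> X"
  using bs unfolding banach_seq_space_def seq_space_def by blast
lemma scale_in: "f \<in> X \<Longrightarrow> (\<lambda>n. c * f n) \<in> X"
  using bs unfolding banach_seq_space_def seq_space_def by blast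
lemma diff_in: assumes "f \<in> X" "g \<in> X" shows "(\<lambda>n. f n - g n) \<in> X"
proof -
  have "(\<lambda>n. f n + (\<lambda>n. (-1) * g n) n) \<in> X" using add_in scale_in assms by blast
  then show ?thesis by simp
qed
lemma N_nonneg: "f \<in> X \<Longrightarrow> N f \<ge> 0"
  using bs unfolding banach_seq_space_def seq_norm_on_def by blast
lemma N_zero_iff: "f \<in> X \<Longrightarrow> N f = 0 \<longleftrightarrow> f = (\<lambda>n. 0)"
  using bs unfolding banach_seq_space_def seq_norm_on_def by blast
lemma N_scale: "f \<in> X \<Longrightarrow> N (\<lambda>n. c * f n) = \<bar>c\<bar> * N f"
  using bs unfolding banach_seq_space_def seq_norm_on_def by blast
lemma N_tri: "f \<in> X \<Longrightarrow> g \<in> X \<Longrightarrow> N (\<lambda>n. f n + g n) \<le> N f + N g"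
  using bs unfolding banach_seq_space_def seq_norm_on_def by blast
lemma N_zero: "N (\<lambda>n. 0) = 0" using N_zero_iff zero_in by blast
lemma N_diff_sym: assumes "f \<in> X" "g \<in> X" shows "N (\<lambda>n. f n - g n) = N (\<lambda>n. g n - f n)"
proof -
  have "N (\<lambda>n. (-1) * (\<lambda>n. f n - g n) n) = N (\<lambda>n. f n - g n)"
    using N_scale[OF diff_in[OF assms], of "-1"] by simp
  moreover have "(\<lambda>n. (-1) * (\<lambda>n. f n - g n) n) = (\<lambda>n. g n - f n)" by auto
  ultimately show ?thesis by metis
qed
lemma complete: "(\<And>k. u k \<in> X) \<Longrightarrow> (\<forall>e>0. \<exists>M. \<forall>j\<ge>M. \<forall>k\<ge>M. N (\<lambda>n. u j n - u k n) < e) \<Longrightarrow>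
        (\<exists>f\<in>X. (\<lambda>k. N (\<lambda>n. u k n - f n)) \<longlonglongrightarrow> 0)"
  using bs unfolding banach_seq_space_def seq_norm_complete_def by blast

lemma coord: "\<exists>K\<ge>0. \<forall>x\<in>X. \<bar>x n\<bar> \<le> K * N x"
proof (cases "\<exists>y\<in>X. y n \<noteq> 0")
  case True
  then obtain y where y: "y \<in> X" "y n \<noteq> 0" by blast
  define z where "z = (\<lambda>m. indicator {n} m * y m)"
  have zX: "z \<in> X" using rect[OF y(1)] z_def by simp
  have "z \<noteq> (\<lambda>n. 0)" using y(2) unfolding z_def by (metis indicator_simps(1) insertI1 mult_1)
  hence Nz: "N z > 0" using N_zero_iff[OF zX] N_nonneg[OF zX] by linarith
  show ?thesis
  proof (intro exI[of _ "C * \<bar>y n\<bar> / N z"] conjI ballI)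
    show "0 \<le> C * \<bar>y n\<bar> / N z" using Cpos Nz by simp
    fix x assume x: "x \<in> X"
    have eq: "(\<lambda>m. indicator {n} m * x m) = (\<lambda>m. (x n / y n) * z m)"
      using y(2) unfolding z_def by (auto simp: indicator_def)
    have "\<bar>x n / y n\<bar> * N z \<le> C * N x" using rect[OF x, of "{n}"] N_scale[OF zX, of "x n / y n"] eq by simp
    hence "\<bar>x n\<bar> * N z \<le> C * N x * \<bar>y n\<bar>" using y(2)
      by (simp add: abs_divide divide_le_eq field_simps)
    thus "\<bar>x n\<bar> \<le> C * \<bar>y n\<bar> / N z * N x" using Nz by (simp add: field_simps)
  qed
next
  case False
  then show ?thesis by (intro exI[of _ 0]) auto
qed

lemma mult01:
  assumes g: "g \<in> X" and h: "\<And>n. 0 \<le> h n \<and> h n \<le> 1"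
  shows "(\<lambda>n. h n * g n) \<in> X \<and> N (\<lambda>n. h n * g n) \<le> C * N g"
proof -
  define r where "r = rec_nat h (\<lambda>k rk. \<lambda>n. rk n - (if (1/2::real)^Suc k \<le> rk n then (1/2)^Suc k else 0))"
  have r0: "r 0 = h" by (simp add: r_def)
  have rS: "r (Suc k) = (\<lambda>n. r k n - (if (1/2::real)^Suc k \<le> r k n then (1/2)^Suc k else 0))" for k
    by (simp add: r_def)
  define A where "A k = {n. (1/2::real)^Suc k \<le> r k n}" for k
  have rb: "0 \<le> r k n \<and> r k n \<le> (1/2)^k" for k n
  proof (induction k arbitrary: n)
    case 0 then show ?case using h r0 by simp
  next
    case (Suc k) then show ?case by (auto simp: rS)
  qed
  define u where "u m = (\<lambda>n. (h n - r m n) * g n)" for m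
  have chiX: "(\<lambda>n. indicator (A m) n * g n) \<in> X" and chiN: "N (\<lambda>n. indicator (A m) n * g n) \<le> C * N g" for m
    using rect[OF g] by auto
  have uS: "u (Suc m) = (\<lambda>n. u m n + (1/2)^Suc m * (indicator (A m) n * g n))" for m
    by (auto simp: u_def rS A_def indicator_def algebra_simps)
  have u0: "u 0 = (\<lambda>n. 0)" by (auto simp: u_def r0)
  have uX: "u m \<in> X" for m
  proof (induction m)
    case 0 then show ?case using u0 zero_in by simp
  next
    case (Suc m) then show ?case unfolding uS using add_in scale_in chiX by blast
  qed
  have Ng: "N g \<ge> 0" using N_nonneg[OF g] .
  have ud: "N (\<lambda>n. u (k+d) n - u k n) \<le> (1/2)^k * (1 - (1/2)^d) * (C * N g)" for k d
  proof (induction d)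
    case 0 then show ?case using N_zero by simp
  next
    case (Suc d)
    have eq: "(\<lambda>n. u (k + Suc d) n - u k n) = (\<lambda>n. (\<lambda>n. u (k+d) n - u k n) n + (\<lambda>n. (1/2)^Suc (k+d) * (indicator (A (k+d)) n * g n)) n)"
      by (auto simp: uS)
    have "N (\<lambda>n. u (k + Suc d) n - u k n) \<le> N (\<lambda>n. u (k+d) n - u k n) + N (\<lambda>n. (1/2)^Suc (k+d) * (indicator (A (k+d)) n * g n))"
      unfolding eq by (rule N_tri[OF diff_in[OF uX uX] scale_in[OF chiX]])
    also have "\<dots> \<le> (1/2)^k * (1 - (1/2)^d) * (C * N g) + (1/2)^Suc (k+d) * (C * N g)"
    proof (rule add_mono)
      have ab: "\<bar>(1/2::real)^Suc (k+d)\<bar> = (1/2)^Suc (k+d)" by simp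
      have "N (\<lambda>n. (1/2)^Suc (k+d) * (indicator (A (k+d)) n * g n)) = (1/2)^Suc (k+d) * N (\<lambda>n. indicator (A (k+d)) n * g n)"
        using N_scale[OF chiX, of "(1/2::real)^Suc(k+d)" "k+d"] by (simp only: ab)
      also have "\<dots> \<le> (1/2)^Suc (k+d) * (C * N g)" using chiN[of "k+d"] by (intro mult_left_mono) auto
      finally show "N (\<lambda>n. (1/2)^Suc (k+d) * (indicator (A (k+d)) n * g n)) \<le> (1/2)^Suc (k+d) * (C * N g)" .
    qed (rule Suc.IH)
    also have "\<dots> = (1/2)^k * (1 - (1/2)^Suc d) * (C * N g)"
      by (simp add: power_add algebra_simps)
    finally show ?case .
  qed
  have ud': "N (\<lambda>n. u j n - u k n) \<le> (1/2)^k * (C * N g)" if "k \<le> j" for j k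
  proof -
    define d where "d = j - k"
    have j: "j = k + d" using that unfolding d_def by simp
    have CN: "C * N g \<ge> 0" using Cpos Ng by simp
    have "(1/2::real)^k * (1 - (1/2)^d) \<le> (1/2)^k" by (simp add: mult_left_le)
    hence "(1/2::real)^k * (1 - (1/2)^d) * (C * N g) \<le> (1/2)^k * (C * N g)"
      using CN by (rule mult_right_mono)
    moreover have "N (\<lambda>n. u j n - u k n) = N (\<lambda>n. u (k+d) n - u k n)" using j by simp
    ultimately show ?thesis using ud[of k d] by linarith
  qed
  have cauchy: "\<forall>e>0. \<exists>M. \<forall>j\<ge>M. \<forall>k\<ge>M. N (\<lambda>n. u j n - u k n) < e"
  proof (intro allI impI)
    fix e :: real assume e: "e > 0"
    have "e / (C * N g + 1) > 0" using e Cpos Ng by (simp add: add_nonneg_pos)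
    then obtain M where M: "(1/2::real)^M < e / (C * N g + 1)"
      using real_arch_pow_inv[of "e / (C * N g + 1)" "1/2"] by auto
    have M': "(1/2::real)^M * (C * N g) < e"
    proof -
      have "(1/2::real)^M * (C * N g) \<le> (1/2)^M * (C * N g + 1)" by simp
      also have "\<dots> < e" using M Cpos Ng by (simp add: pos_less_divide_eq add_nonneg_pos)
      finally show ?thesis .
    qed
    have mono: "(1/2::real)^k * (C * N g) \<le> (1/2)^M * (C * N g)" if "k \<ge> M" for k
      using that Cpos Ng by (intro mult_right_mono power_decreasing) auto
    show "\<exists>M. \<forall>j\<ge>M. \<forall>k\<ge>M. N (\<lambda>n. u j n - u k n) < e"
    proof (intro exI[of _ M] allI impI)
      fix j k assume jk: "j \<ge> M" "k \<ge> M"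
      show "N (\<lambda>n. u j n - u k n) < e"
      proof (cases "k \<le> j")
        case True then show ?thesis using ud'[OF True] mono[OF jk(2)] M' by linarith
      next
        case False
        then have "N (\<lambda>n. u k n - u j n) \<le> (1/2)^j * (C * N g)" using ud' by simp
        then show ?thesis using N_diff_sym[OF uX uX, of j k] mono[OF jk(1)] M' by linarith
      qed
    qed
  qed
  obtain F where FX: "F \<in> X" and Flim: "(\<lambda>k. N (\<lambda>n. u k n - F n)) \<longlonglongrightarrow> 0"
    using complete[OF uX cauchy] by blast
  have "F n = h n * g n" for n
  proof -
    obtain K where K: "K \<ge> 0" "\<forall>x\<in>X. \<bar>x n\<bar> \<le> K * N x" using coord[of n] by blast
    have "(\<lambda>k. u k n - F n) \<longlonglongrightarrow> 0"
    proof (rule Lim_null_comparison)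
      show "\<forall>\<^sub>F k in sequentially. norm (u k n - F n) \<le> K * N (\<lambda>n. u k n - F n)"
        using K(2) diff_in[OF uX FX] by (auto intro!: always_eventually)
      show "(\<lambda>k. K * N (\<lambda>n. u k n - F n)) \<longlonglongrightarrow> 0"
        using tendsto_mult_left[OF Flim, of K] by simp
    qed
    hence l1: "(\<lambda>k. u k n) \<longlonglongrightarrow> F n" by (simp add: LIM_zero_iff)
    have "(\<lambda>k. r k n) \<longlonglongrightarrow> 0"
    proof (rule Lim_null_comparison)
      show "\<forall>\<^sub>F k in sequentially. norm (r k n) \<le> (1/2)^k"
        using rb by (auto intro!: always_eventually)
      show "(\<lambda>k. (1/2::real)^k) \<longlonglongrightarrow> 0" by (rule LIMSEQ_power_zero) simp
    qed
    hence "(\<lambda>k. (h n - r k n) * g n) \<longlonglongrightarrow> (h n - 0) * g n"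
      by (intro tendsto_intros)
    hence l2: "(\<lambda>k. u k n) \<longlonglongrightarrow> h n * g n" by (simp add: u_def)
    show ?thesis using LIMSEQ_unique[OF l1 l2] .
  qed
  hence Feq: "F = (\<lambda>n. h n * g n)" by auto
  have Nu: "N (u k) \<le> C * N g" for k
  proof -
    have "N (\<lambda>n. u (0+k) n - u 0 n) \<le> (1/2)^0 * (1 - (1/2)^k) * (C * N g)" by (rule ud)
    moreover have "(\<lambda>n. u (0+k) n - u 0 n) = u k" using u0 by auto
    moreover have "(1 - (1/2::real)^k) * (C * N g) \<le> C * N g"
    proof -
      have "0 \<le> (1/2::real)^k * (C * N g)" using Cpos Ng by simp
      thus ?thesis by (simp add: left_diff_distrib)
    qed
    ultimately show ?thesis by simp
  qed
  have NF: "N F \<le> C * N g + N (\<lambda>n. u k n - F n)" for k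
  proof -
    have "F = (\<lambda>n. u k n + (\<lambda>n. F n - u k n) n)" by auto
    hence "N F \<le> N (u k) + N (\<lambda>n. F n - u k n)" using N_tri[OF uX diff_in[OF FX uX]] by metis
    then show ?thesis using Nu[of k] N_diff_sym[OF FX uX, of k] by linarith
  qed
  have "(\<lambda>k. C * N g + N (\<lambda>n. u k n - F n)) \<longlonglongrightarrow> C * N g + 0"
    by (intro tendsto_intros Flim)
  hence "N F \<le> C * N g" using NF by (intro LIMSEQ_le_const) auto
  then show ?thesis using FX Feq by simp
qed

lemma mult1:
  assumes g: "g \<in> X" and h: "\<And>n. \<bar>h n\<bar> \<le> 1"
  shows "(\<lambda>n. h n * g n) \<in> X \<and> N (\<lambda>n. h n * g n) \<le> 2 * C * N g"
proof -
  have p: "(\<lambda>n. max (h n) 0 * g n) \<in> X \<and> N (\<lambda>n. max (h n) 0 * g n) \<le> C * N g"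
    using h by (intro mult01[OF g]) (simp add: abs_le_iff max_def)
  have m: "(\<lambda>n. max (- h n) 0 * g n) \<in> X \<and> N (\<lambda>n. max (- h n) 0 * g n) \<le> C * N g"
    using h by (intro mult01[OF g]) (simp add: abs_le_iff max_def)
  have eq: "(\<lambda>n. h n * g n) = (\<lambda>n. (\<lambda>n. max (h n) 0 * g n) n + (\<lambda>n. (-1) * (\<lambda>n. max (- h n) 0 * g n) n) n)"
  proof
    fix n show "h n * g n = max (h n) 0 * g n + (-1) * (max (- h n) 0 * g n)"
      by (cases "h n \<ge> 0") (simp_all add: max_def)
  qed
  have X1: "(\<lambda>n. (-1) * (\<lambda>n. max (- h n) 0 * g n) n) \<in> X" using m scale_in by blast
  have "N (\<lambda>n. h n * g n) \<le> N (\<lambda>n. max (h n) 0 * g n) + N (\<lambda>n. (-1) * (\<lambda>n. max (- h n) 0 * g n) n)"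
    by (subst eq) (rule N_tri[OF conjunct1[OF p] X1])
  also have "\<dots> \<le> C * N g + C * N g" using p m N_scale[of "\<lambda>n. max (- h n) 0 * g n" "-1"] by simp
  finally have "N (\<lambda>n. h n * g n) \<le> 2 * C * N g" by simp
  moreover have "(\<lambda>n. h n * g n) \<in> X" by (subst eq) (rule add_in[OF conjunct1[OF p] X1])
  ultimately show ?thesis by blast
qed

definition "Hs = {h :: nat \<Rightarrow> real. \<forall>n. \<bar>h n\<bar> \<le> (1::real)}"

lemma lnorm_Hs: "lnorm N f = (SUP h\<in>Hs. N (\<lambda>n. h n * f n))"
  unfolding lnorm_def Hs_def ..

lemma Hs_ne: "Hs \<noteq> {}"
proof -
  have "(\<lambda>n. 1) \<in> Hs" by (simp add: Hs_def)
  thus ?thesis by blast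
qed

lemma bdd: "f \<in> X \<Longrightarrow> bdd_above ((\<lambda>h. N (\<lambda>n. h n * f n)) ` Hs)"
  unfolding Hs_def using mult1 by (intro bdd_aboveI[of _ "2 * C * N f"]) auto

lemma upper: "f \<in> X \<Longrightarrow> (\<And>n. \<bar>h n\<bar> \<le> 1) \<Longrightarrow> N (\<lambda>n. h n * f n) \<le> lnorm N f"
  unfolding lnorm_Hs using bdd by (intro cSUP_upper) (auto simp: Hs_def)

lemma le2C: "f \<in> X \<Longrightarrow> lnorm N f \<le> 2 * C * N f"
  unfolding lnorm_Hs using Hs_ne mult1 by (intro cSUP_least) (auto simp: Hs_def)

lemma geN: "f \<in> X \<Longrightarrow> N f \<le> lnorm N f"
  using upper[of f "\<lambda>n. 1"] by simp

lemma ideal: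
  assumes g: "g \<in> X" and fg: "\<And>n. \<bar>f n\<bar> \<le> \<bar>g n\<bar>"
  shows "f \<in> X \<and> lnorm N f \<le> lnorm N g"
proof -
  define k where "k n = (if g n = 0 then 0 else f n / g n)" for n
  have k1: "\<bar>k n\<bar> \<le> 1" for n
    using fg[of n] by (auto simp: k_def abs_divide divide_le_eq_1)
  have feq: "f = (\<lambda>n. k n * g n)"
  proof
    fix n show "f n = k n * g n" using fg[of n] by (auto simp: k_def)
  qed
  have fX: "f \<in> X" using mult1[OF g k1] feq by simp
  have "lnorm N f \<le> lnorm N g"
    unfolding lnorm_Hs[of f]
  proof (rule cSUP_least[OF Hs_ne])
    fix h assume "h \<in> Hs"
    hence h1: "\<bar>h n * k n\<bar> \<le> 1" for n using k1[of n] by (auto simp: Hs_def abs_mult intro: mult_le_one)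
    have "(\<lambda>n. h n * f n) = (\<lambda>n. (h n * k n) * g n)" by (subst feq) (simp add: mult.assoc)
    then show "N (\<lambda>n. h n * f n) \<le> lnorm N g" using upper[OF g h1] by simp
  qed
  with fX show ?thesis by blast
qed

lemma lnorm_zero: "lnorm N (\<lambda>n. 0) = 0"
  using le2C[OF zero_in] geN[OF zero_in] N_zero by simp

lemma scale_le: assumes f: "f \<in> X" shows "lnorm N (\<lambda>n. c * f n) \<le> \<bar>c\<bar> * lnorm N f"
  unfolding lnorm_Hs[of "\<lambda>n. c * f n"]
proof (rule cSUP_least[OF Hs_ne])
  fix h assume "h \<in> Hs"
  hence h: "\<And>n. \<bar>h n\<bar> \<le> 1" by (auto simp: Hs_def)
  have "(\<lambda>n. h n * (c * f n)) = (\<lambda>n. c * (\<lambda>n. h n * f n) n)" by (auto simp: algebra_simps)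
  hence "N (\<lambda>n. h n * (c * f n)) = \<bar>c\<bar> * N (\<lambda>n. h n * f n)" using N_scale mult1[OF f h] by simp
  also have "\<dots> \<le> \<bar>c\<bar> * lnorm N f" using upper[OF f h] by (intro mult_left_mono) auto
  finally show "N (\<lambda>n. h n * (c * f n)) \<le> \<bar>c\<bar> * lnorm N f" .
qed

lemma lnorm_norm: "seq_norm_on X (lnorm N)"
  unfolding seq_norm_on_def
proof (intro conjI ballI allI)
  fix f assume f: "f \<in> X"
  show "0 \<le> lnorm N f" using geN[OF f] N_nonneg[OF f] by linarith
  show "lnorm N f = 0 \<longleftrightarrow> f = (\<lambda>n. 0)"
    using geN[OF f] N_nonneg[OF f] N_zero_iff[OF f] lnorm_zero by fastforce
next
  fix c :: real and f assume f: "f \<in> X"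
  show "lnorm N (\<lambda>n. c * f n) = \<bar>c\<bar> * lnorm N f"
  proof (cases "c = 0")
    case True then show ?thesis using lnorm_zero by simp
  next
    case False
    have "lnorm N (\<lambda>n. (1/c) * (\<lambda>n. c * f n) n) \<le> \<bar>1/c\<bar> * lnorm N (\<lambda>n. c * f n)"
      by (rule scale_le[OF scale_in[OF f]])
    moreover have "(\<lambda>n. (1/c) * (\<lambda>n. c * f n) n) = f" using False by auto
    ultimately have "lnorm N f \<le> \<bar>1/c\<bar> * lnorm N (\<lambda>n. c * f n)" by simp
    hence "\<bar>c\<bar> * lnorm N f \<le> lnorm N (\<lambda>n. c * f n)" using False
      by (simp add: abs_divide field_simps)
    then show ?thesis using scale_le[OF f, of c] by linarith
  qed
next
  fix f g assume f: "f \<in> X" and g: "g \<in> X"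
  show "lnorm N (\<lambda>n. f n + g n) \<le> lnorm N f + lnorm N g"
    unfolding lnorm_Hs[of "\<lambda>n. f n + g n"]
  proof (rule cSUP_least[OF Hs_ne])
    fix h assume "h \<in> Hs"
    hence h: "\<And>n. \<bar>h n\<bar> \<le> 1" by (auto simp: Hs_def)
    have "(\<lambda>n. h n * (f n + g n)) = (\<lambda>n. (\<lambda>n. h n * f n) n + (\<lambda>n. h n * g n) n)"
      by (auto simp: algebra_simps)
    hence "N (\<lambda>n. h n * (f n + g n)) \<le> N (\<lambda>n. h n * f n) + N (\<lambda>n. h n * g n)"
      using N_tri mult1[OF f h] mult1[OF g h] by simp
    also have "\<dots> \<le> lnorm N f + lnorm N g" by (intro add_mono upper f g h)
    finally show "N (\<lambda>n. h n * (f n + g n)) \<le> lnorm N f + lnorm N g" .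
  qed
qed

lemma lnorm_complete: "seq_norm_complete X (lnorm N)"
  unfolding seq_norm_complete_def
proof (intro allI impI)
  fix u :: "nat \<Rightarrow> nat \<Rightarrow> real"
  assume uX: "\<forall>k. u k \<in> X" and cau: "\<forall>e>0. \<exists>M. \<forall>j\<ge>M. \<forall>k\<ge>M. lnorm N (\<lambda>n. u j n - u k n) < e"
  have cau': "\<forall>e>0. \<exists>M. \<forall>j\<ge>M. \<forall>k\<ge>M. N (\<lambda>n. u j n - u k n) < e"
  proof (intro allI impI)
    fix e :: real assume "e > 0"
    then obtain M where M: "\<forall>j\<ge>M. \<forall>k\<ge>M. lnorm N (\<lambda>n. u j n - u k n) < e" using cau by blast
    show "\<exists>M. \<forall>j\<ge>M. \<forall>k\<ge>M. N (\<lambda>n. u j n - u k n) < e"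
      using M geN diff_in uX by (meson le_less_trans)
  qed
  obtain F where FX: "F \<in> X" and lim: "(\<lambda>k. N (\<lambda>n. u k n - F n)) \<longlonglongrightarrow> 0"
    using complete[of u] uX cau' by blast
  have "(\<lambda>k. lnorm N (\<lambda>n. u k n - F n)) \<longlonglongrightarrow> 0"
  proof (rule Lim_null_comparison)
    have "norm (lnorm N (\<lambda>n. u k n - F n)) \<le> 2 * C * N (\<lambda>n. u k n - F n)" for k
    proof -
      have d: "(\<lambda>n. u k n - F n) \<in> X" using diff_in uX FX by blast
      have "0 \<le> lnorm N (\<lambda>n. u k n - F n)" using geN[OF d] N_nonneg[OF d] by linarith
      then show ?thesis using le2C[OF d] by simp
    qed
    then show "\<forall>\<^sub>F k in sequentially. norm (lnorm N (\<lambda>n. u k n - F n)) \<le> 2 * C * N (\<lambda>n. u k n - F n)"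
      by (intro always_eventually) auto
    show "(\<lambda>k. 2 * C * N (\<lambda>n. u k n - F n)) \<longlonglongrightarrow> 0"
      using tendsto_mult_left[OF lim, of "2 * C"] by simp
  qed
  with FX show "\<exists>f\<in>X. (\<lambda>k. lnorm N (\<lambda>n. u k n - f n)) \<longlonglongrightarrow> 0" by blast
qed

lemma lnorm_bfs: "banach_function_space X (lnorm N)"
  unfolding banach_function_space_def banach_seq_space_def
  using bs lnorm_norm lnorm_complete ideal unfolding banach_seq_space_def by blast

lemma lnorm_equiv: "equivalent_norms X N (lnorm N)"
  unfolding equivalent_norms_def
proof -
  have "\<forall>f\<in>X. 1 * N f \<le> lnorm N f \<and> lnorm N f \<le> (2 * C) * N f" using geN le2C by auto
  moreover have "(1::real) > 0" "2 * C > 0" using Cpos by auto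
  ultimately show "\<exists>a>0. \<exists>b>0. \<forall>f\<in>X. a * N f \<le> lnorm N f \<and> lnorm N f \<le> b * N f" by blast
qed

end


theorem corollary4p6:
  fixes \<mu> :: "nat measure"
    and X :: "(nat \<Rightarrow> real) set"
    and N :: "(nat \<Rightarrow> real) \<Rightarrow> real"
  assumes "space \<mu> = UNIV" and "sets \<mu> = Pow UNIV"
    and "finite_measure \<mu>"
    and "\<forall>n. emeasure \<mu> {n} > 0"
    and "banach_seq_space X N"
  shows "(\<exists>N'. equivalent_norms X N N' \<and> banach_function_space X N')
           \<longleftrightarrow> banach_rectangular_function_space X N"
proof
  assume "\<exists>N'. equivalent_norms X N N' \<and> banach_function_space X N'"
  then obtain N' a b where a: "a > 0" and b: "b > 0" and ab: "\<forall>f\<in>X. a * N f \<le> N' f \<and> N' f \<le> b * N f"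
    and bfs: "banach_function_space X N'"
    unfolding equivalent_norms_def by blast
  have id: "\<And>f g. g \<in> X \<Longrightarrow> (\<forall>n. \<bar>f n\<bar> \<le> \<bar>g n\<bar>) \<Longrightarrow> f \<in> X \<and> N' f \<le> N' g"
    using bfs unfolding banach_function_space_def by blast
  have "rectangular X N"
    unfolding rectangular_def
  proof (intro exI[of _ "b / a"] conjI ballI allI)
    show "b / a > 0" using a b by simp
    fix f and A :: "nat set" assume f: "f \<in> X"
    have le: "\<forall>n. \<bar>indicator A n * f n\<bar> \<le> \<bar>f n\<bar>" by (simp add: indicator_def)
    show X1: "(\<lambda>n. indicator A n * f n) \<in> X" using id[OF f le] by blast
    have "a * N (\<lambda>n. indicator A n * f n) \<le> N' (\<lambda>n. indicator A n * f n)" using ab X1 by blast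
    also have "\<dots> \<le> N' f" using id[OF f le] by blast
    also have "\<dots> \<le> b * N f" using ab f by blast
    finally have "a * N (\<lambda>n. indicator A n * f n) \<le> b * N f" .
    then show "N (\<lambda>n. indicator A n * f n) \<le> b / a * N f" using a
      by (simp add: field_simps)
  qed
  then show "banach_rectangular_function_space X N"
    unfolding banach_rectangular_function_space_def using assms(5) by blast
next
  assume "banach_rectangular_function_space X N"
  then obtain C where C: "C > 0" and r: "\<forall>f\<in>X. \<forall>A :: nat set.
     (\<lambda>n. indicator A n * f n) \<in> X \<and> N (\<lambda>n. indicator A n * f n) \<le> C * N f"
    unfolding banach_rectangular_function_space_def rectangular_def by blast
  interpret rectsp X N C
    using assms(5) C r by unfold_locales blast+
  show "\<exists>N'. equivalent_norms X N N' \<and> banach_function_space X N'"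
    using lnorm_equiv lnorm_bfs by blast
qed

end
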